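(* Let $\kappa\in\mathbb{C}$, let $M\ge1$ be an integer and let $\phi_1,\dots,\phi_M$ be parameters. For each $k$ put $$\Delta^*_k=e^{-i\phi_k}\Bigl(\sqrt{\cos^2\phi_k+\kappa}+\cos\phi_k\Bigr),\qquad \Delta_k=e^{i\phi_k}\Bigl(\sqrt{\cos^2\phi_k+\kappa}+\cos\phi_k\Bigr),$$ (so that $\kappa=\Delta^*_k\Delta_k-\Delta^*_k-\Delta_k$). For $m\in\mathbb{Z}$, $x_1\in\mathbb{C}$ and amplitudes $f_1,\dots,f_M$ define $$X_m(x_1;\phi_k,f_k)=f_k\,e^{(\Delta^*_k-\Delta_k)x_1}\Bigl(\frac{\Delta_k}{\Delta^*_k}\Bigr)^{m+1}$$ and $$\boldsymbol{\tau}_m\bigl(x_1;\{\phi_k,f_k\}_{k=1}^M\bigr)=\prod_{i<j}(\Delta^*_i-\Delta^*_j)^{-1}\det\Bigl|(1-\Delta^*_j)^{i-1}-X_m(x_1;\phi_j,f_j)\,(1-\Delta_j)^{i-1}\frac{\Delta^*_j}{\Delta_j}\Bigr|_{i,j=1}^M .$$ Then for every choice of $\phi_1,\dots,\phi_M$ for which this expression is defined, $\boldsymbol{\tau}_m\bigl(0;\{\phi_k,1\}_{k=1}^M\bigr)=0$ for all $m\in\{-M+1,-M+2,\dots,0\}$.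
   Context: A fixed branch of the square root is used in the definition of $\Delta^*_k,\Delta_k$. "Defined" means that the $\Delta^*_k$ are pairwise distinct and $\Delta_k,\Delta^*_k\neq0$. The function $\boldsymbol{\tau}_m$ is the (normalized, rational) $M$-soliton tau-function of the relativistic Toda chain evaluated at continuous time $x_1$, with all soliton amplitudes $f_k$ set to $1$ in the claim. *)

theory Defs
  imports Complex_Main "Jordan_Normal_Form.Determinant"
begin

definition Dstar :: "complex \<Rightarrow> complex \<Rightarrow> complex" where
  "Dstar \<kappa> \<phi> = exp (- \<i> * \<phi>) * (csqrt ((cos \<phi>)^2 + \<kappa>) + cos \<phi>)"

definition Dlt :: "complex \<Rightarrow> complex \<Rightarrow> complex" where
  "Dlt \<kappa> \<phi> = exp (\<i> * \<phi>) * (csqrt ((cos \<phi>)^2 + \<kappa>) + cos \<phi>)"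

definition Xm :: "complex \<Rightarrow> int \<Rightarrow> complex \<Rightarrow> complex \<Rightarrow> complex \<Rightarrow> complex" where
  "Xm \<kappa> m x1 \<phi> f = f * exp ((Dstar \<kappa> \<phi> - Dlt \<kappa> \<phi>) * x1)
      * (Dlt \<kappa> \<phi> / Dstar \<kappa> \<phi>) powi (m + 1)"

text \<open>The tau function; phi and f are indexed by 1..M. Matrix entries use 0-based
  indices i, j, corresponding to the paper's i+1, j+1.\<close>
definition tau :: "complex \<Rightarrow> nat \<Rightarrow> (nat \<Rightarrow> complex) \<Rightarrow> (nat \<Rightarrow> complex) \<Rightarrow> int \<Rightarrow> complex \<Rightarrow> complex" where
  "tau \<kappa> M \<phi> f m x1 =
     (\<Prod>(i, j) \<in> {(i, j). 1 \<le> i \<and> i < j \<and> j \<le> M}.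
         inverse (Dstar \<kappa> (\<phi> i) - Dstar \<kappa> (\<phi> j)))
     * det (mat M M (\<lambda>(i, j).
          (1 - Dstar \<kappa> (\<phi> (j+1))) ^ i
          - Xm \<kappa> m x1 (\<phi> (j+1)) (f (j+1)) * (1 - Dlt \<kappa> (\<phi> (j+1))) ^ i
            * (Dstar \<kappa> (\<phi> (j+1)) / Dlt \<kappa> (\<phi> (j+1)))))"

end

theory Submission
  imports Defs
begin

lemma binom_aux: "(\<Sum>i\<le>n. of_nat (n choose i) * (-1)^i * (x::complex)^i) = (1 - x)^n"
proof -
  have "(1 - x)^n = (-x + 1)^n" by simp
  also have "\<dots> = (\<Sum>k\<le>n. of_nat (n choose k) * (-x)^k * 1^(n-k))"
    by (rule binomial_ring)
  also have "\<dots> = (\<Sum>k\<le>n. of_nat (n choose k) * (-1)^k * x^k)"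
    by (intro sum.cong refl) (subst power_minus, simp add: mult.assoc)
  finally show ?thesis by (rule sym)
qed

lemma sum_trunc:
  fixes n M :: nat
  assumes "n < M"
  shows "(\<Sum>i<M. g i * (if i \<le> n then c i else 0)) = (\<Sum>i\<le>n. c i * (g i :: complex))"
proof -
  have "(\<Sum>i<M. g i * (if i \<le> n then c i else 0)) = (\<Sum>i\<in>{..n}. g i * c i)"
    using assms by (intro sum.mono_neutral_cong_right) auto
  then show ?thesis by (simp add: mult.commute)
qed

lemma X_lemma:
  assumes a0: "Dstar k p \<noteq> 0" and b0: "Dlt k p \<noteq> 0"
  shows "Xm k (- int n) 0 p 1 * (Dstar k p / Dlt k p) = (Dstar k p / Dlt k p)^n"
proof -
  define a where "a = Dstar k p"
  define b where "b = Dlt k p"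
  have a: "a \<noteq> 0" "b \<noteq> 0" using a0 b0 by (auto simp: a_def b_def)
  have X1: "Xm k (- int n) 0 p 1 = (b/a) powi (1 - int n)"
    unfolding Xm_def a_def b_def by simp
  have "(b/a) powi (1 - int n) = (b/a) powi 1 * (b/a) powi (- int n)"
    using power_int_add[of "b/a" 1 "- int n"] a by simp
  also have "(b/a) powi (- int n) = (a/b)^n"
    by (simp add: power_int_minus power_inverse[symmetric] inverse_divide)
  finally have X2: "(b/a) powi (1 - int n) = (b/a) * (a/b)^n" by simp
  have X3: "(b/a) * (a/b) = 1" using a by simp
  have "Xm k (- int n) 0 p 1 * (a/b) = ((b/a) * (a/b)) * (a/b)^n"
    unfolding X1 X2 by (simp only: mult_ac)
  also have "\<dots> = (a/b)^n" unfolding X3 by simp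
  finally show ?thesis unfolding a_def b_def .
qed
theorem proposition3p3:
  fixes \<kappa> :: complex and M :: nat and \<phi> :: "nat \<Rightarrow> complex" and m :: int
  assumes "M \<ge> 1"
    and "inj_on (\<lambda>k. Dstar \<kappa> (\<phi> k)) {1..M}"
    and "\<forall>k \<in> {1..M}. Dstar \<kappa> (\<phi> k) \<noteq> 0 \<and> Dlt \<kappa> (\<phi> k) \<noteq> 0"
    and "- int M + 1 \<le> m" and "m \<le> 0"
  shows "tau \<kappa> M \<phi> (\<lambda>_. 1) m 0 = 0"
proof -
  define n where "n = nat (- m)"
  have mn: "m = - int n" and nM: "n < M" using assms(4,5) by (auto simp: n_def)
  define A where "A = mat M M (\<lambda>(i, j).
          (1 - Dstar \<kappa> (\<phi> (j+1))) ^ i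
          - Xm \<kappa> m 0 (\<phi> (j+1)) ((\<lambda>_. 1) (j+1)) * (1 - Dlt \<kappa> (\<phi> (j+1))) ^ i
            * (Dstar \<kappa> (\<phi> (j+1)) / Dlt \<kappa> (\<phi> (j+1))))"
  define v :: "complex vec" where "v = vec M (\<lambda>i. if i \<le> n then of_nat (n choose i) * (-1)^i else 0)"
  have A: "A \<in> carrier_mat M M" unfolding A_def by simp
  have At: "transpose_mat A \<in> carrier_mat M M" using A by simp
  have v: "v \<in> carrier_vec M" unfolding v_def by simp
  have v0: "v \<noteq> 0\<^sub>v M"
  proof
    assume "v = 0\<^sub>v M"
    hence "v $ 0 = 0\<^sub>v M $ 0" by simp
    thus False using assms(1) unfolding v_def by simp
  qed
  have prod: "transpose_mat A *\<^sub>v v = 0\<^sub>v M"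
  proof (rule eq_vecI)
    fix j assume j0: "j < dim_vec (0\<^sub>v M :: complex vec)"
    hence j: "j < M" by simp
    define a where "a = Dstar \<kappa> (\<phi> (j+1))"
    define b where "b = Dlt \<kappa> (\<phi> (j+1))"
    have a0: "a \<noteq> 0" and b0: "b \<noteq> 0" using assms(3) j unfolding a_def b_def by auto
    define X where "X = Xm \<kappa> m 0 (\<phi> (j+1)) 1"
    have X: "X * (a / b) = (a/b)^n"
      unfolding X_def a_def b_def mn using X_lemma a0 b0 unfolding a_def b_def by blast
    have Aij: "A $$ (i, j) = (1 - a)^i - X * (1 - b)^i * (a/b)" if "i < M" for i
      using that j by (simp add: A_def a_def b_def X_def)
    have vi: "v $ i = (if i \<le> n then of_nat (n choose i) * (-1)^i else 0)" if "i < M" for i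
      using that by (simp add: v_def)
    have "(transpose_mat A *\<^sub>v v) $ j = (\<Sum>i<M. A $$ (i, j) * v $ i)"
      using A v j by (simp add: mult_mat_vec_def scalar_prod_def row_transpose lessThan_atLeast0)
    also have "\<dots> = (\<Sum>i<M. ((1 - a)^i - X * (1 - b)^i * (a/b)) * (if i \<le> n then of_nat (n choose i) * (-1)^i else 0))"
      using Aij vi by (intro sum.cong) auto
    also have "\<dots> = (\<Sum>i\<le>n. (of_nat (n choose i) * (-1)^i) * ((1 - a)^i - X * (1 - b)^i * (a/b)))"
      by (rule sum_trunc[OF nM])
    also have "\<dots> = (\<Sum>i\<le>n. of_nat (n choose i) * (-1)^i * (1 - a)^i)
        - (X * (a/b)) * (\<Sum>i\<le>n. of_nat (n choose i) * (-1)^i * (1 - b)^i)"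
    proof -
      have e: "\<And>c p q :: complex. c * (p - X * q * (a/b)) = c * p - (X * (a/b)) * (c * q)"
        by (simp add: algebra_simps)
      show ?thesis unfolding e sum_subtractf sum_distrib_left[symmetric] by (simp only: mult.assoc)
    qed
    also have "\<dots> = a^n - (a/b)^n * b^n" unfolding binom_aux X by simp
    also have "\<dots> = 0" using b0 by (simp add: power_divide)
    finally show "(transpose_mat A *\<^sub>v v) $ j = 0\<^sub>v M $ j" using j by simp
  next
    show "dim_vec (transpose_mat A *\<^sub>v v) = dim_vec (0\<^sub>v M)" using At by simp
  qed
  have "det (transpose_mat A) = 0"
    using det_0_iff_vec_prod_zero[OF At] v v0 prod by blast
  hence "det A = 0" using det_transpose[OF A] by simp
  thus ?thesis unfolding tau_def A_def by simp
qed

end
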